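(* Let $\mathbb{P}: M_2 \to M_2$ be the linear map $$\mathbb{P}\begin{pmatrix} x_{11} & x_{12} \\ x_{21} & x_{22}\end{pmatrix} = \begin{pmatrix} \frac{x_{11}+x_{22}}{2} & x_{12} \\ x_{21} & \frac{x_{11}+x_{22}}{2}\end{pmatrix},$$ and let $\mathbb{I}$ denote the identity map on $M_2$. Then the minimum eigenvalue of $(\mathbb{I}_A\otimes\mathbb{P}_B)(\sigma_{AB})$, minimized over all two-qubit density matrices $\sigma_{AB}$ on $\mathbb{C}^2\otimes\mathbb{C}^2$, equals $-\frac14$, and this minimum is attained for a maximally entangled state, e.g. $\frac{1}{\sqrt2}(|00\rangle+|11\rangle)$.
   Context: $M_2$ denotes the space of complex $2\times 2$ matrices; $\mathbb{I}_A\otimes\mathbb{P}_B$ denotes the map acting as the identity on the first qubit and as $\mathbb{P}$ on the second qubit. A two-qubit density matrix is a positive semidefinite trace-one operator on $\mathbb{C}^2\otimes\mathbb{C}^2$. *)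

theory Defs
  imports "Jordan_Normal_Form.Jordan_Normal_Form"
begin

definition Pmap :: "complex mat \<Rightarrow> complex mat" where
  "Pmap X = mat 2 2 (\<lambda>(i,j). if i = j then (X $$ (0,0) + X $$ (1,1)) / 2 else X $$ (i,j))"

text \<open>Two-qubit operators are 4x4 matrices in the basis |ab>, index 2a+b (a on A, b on B).
  The (a,a') block of the 4x4 matrix S, a 2x2 matrix acting on B.\<close>
definition block :: "complex mat \<Rightarrow> nat \<Rightarrow> nat \<Rightarrow> complex mat" where
  "block S a a' = mat 2 2 (\<lambda>(b,b'). S $$ (2*a+b, 2*a'+b'))"

definition id_tensor_P :: "complex mat \<Rightarrow> complex mat" where
  "id_tensor_P S = mat 4 4 (\<lambda>(i,j). Pmap (block S (i div 2) (j div 2)) $$ (i mod 2, j mod 2))"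

definition positive_semidef :: "complex mat \<Rightarrow> bool" where
  "positive_semidef S \<longleftrightarrow> S \<in> carrier_mat (dim_row S) (dim_row S) \<and>
     (\<forall>i < dim_row S. \<forall>j < dim_row S. S $$ (j,i) = cnj (S $$ (i,j))) \<and>
     (\<forall>v \<in> carrier_vec (dim_row S).
        0 \<le> Re (\<Sum>i < dim_row S. \<Sum>j < dim_row S. cnj (v $ i) * S $$ (i,j) * v $ j))"

definition density2 :: "complex mat \<Rightarrow> bool" where
  "density2 S \<longleftrightarrow> S \<in> carrier_mat 4 4 \<and> positive_semidef S \<and> (\<Sum>i < 4. S $$ (i,i)) = 1"

definition bell_vec :: "complex vec" where
  "bell_vec = vec 4 (\<lambda>i. if i = 0 \<or> i = 3 then complex_of_real (1 / sqrt 2) else 0)"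

definition bell_state :: "complex mat" where
  "bell_state = mat 4 4 (\<lambda>(i,j). bell_vec $ i * cnj (bell_vec $ j))"

end

theory Submission
  imports Defs
begin

definition Q :: "complex mat \<Rightarrow> complex vec \<Rightarrow> complex" where
  "Q S v = (\<Sum>i<4. \<Sum>j<4. cnj (v $ i) * S $$ (i,j) * v $ j)"

definition v4 :: "complex \<Rightarrow> complex \<Rightarrow> complex \<Rightarrow> complex \<Rightarrow> complex vec" where
  "v4 a b c d = vec 4 (\<lambda>i. if i = 0 then a else if i = 1 then b else if i = 2 then c else d)"

lemma sum4: "(\<Sum>i<(4::nat). f i) = f 0 + f 1 + f 2 + f 3"
  by (simp add: eval_nat_numeral)

lemma v4_idx[simp]: "v4 a b c d $ 0 = a" "v4 a b c d $ 1 = b" "v4 a b c d $ 2 = c"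
  "v4 a b c d $ 3 = d" "v4 a b c d $ Suc 0 = b"
  by (simp_all add: v4_def)

lemma v4_dim[simp]: "dim_vec (v4 a b c d) = 4"
  by (simp add: v4_def)

lemma v4_carrier[simp]: "v4 a b c d \<in> carrier_vec 4"
  by (simp add: v4_def)

lemma T_idx: "i < 4 \<Longrightarrow> j < 4 \<Longrightarrow> id_tensor_P S $$ (i,j) =
   (if i mod 2 = j mod 2 then (S $$ (2*(i div 2), 2*(j div 2)) + S $$ (2*(i div 2)+1, 2*(j div 2)+1))/2 else S $$ (i,j))"
  unfolding id_tensor_P_def Pmap_def block_def
  by (auto simp: mod_less_divisor)

lemma key: "Q (id_tensor_P S) u + (\<Sum>i<4. cnj(u$i)*u$i)/4 * (\<Sum>i<4. S$$(i,i)) =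
   1/2 * Q S u + 1/2 * Q S (v4 (cnj(u$1)) (cnj(u$0)) 0 0) + 1/2 * Q S (v4 0 0 (cnj (u$3)) (cnj (u$2)))
  + 1/4 * Q S (v4 (cnj (u$3)) (cnj (u$2)) (cnj (u$1)) (cnj (u$0)))
  + 1/4 * (Q S (v4 (u$2) (-u$3) 0 0) + Q S (v4 (-u$1) 0 (-u$3) 0) + Q S (v4 (-u$0) 0 0 (-u$3))
         + Q S (v4 0 (-u$1) (-u$2) 0) + Q S (v4 0 (-u$0) 0 (-u$2)) + Q S (v4 0 0 (-u$0) (u$1)))"
  unfolding Q_def sum4
  apply (simp add: T_idx)
  apply (simp add: field_simps)
  done

lemma Q_real:
  assumes herm: "\<forall>i<4. \<forall>j<4. S $$ (j,i) = cnj (S $$ (i,j))"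
  shows "Im (Q S w) = 0"
proof -
  have "cnj (Q S w) = (\<Sum>i<4. \<Sum>j<4. cnj (cnj (w$i) * S$$(i,j) * w$j))"
    by (simp only: Q_def cnj_sum)
  also have "\<dots> = (\<Sum>i<4. \<Sum>j<4. w$i * S$$(j,i) * cnj(w$j))"
  proof (rule sum.cong[OF refl], rule sum.cong[OF refl])
    fix i j assume "i \<in> {..<4::nat}" "j \<in> {..<4::nat}"
    hence e: "S$$(j,i) = cnj (S$$(i,j))" using herm by blast
    show "cnj (cnj (w$i) * S$$(i,j) * w$j) = w$i * S$$(j,i) * cnj(w$j)"
      unfolding e by simp
  qed
  also have "\<dots> = (\<Sum>j<4. \<Sum>i<4. w$i * S$$(j,i) * cnj(w$j))"
    by (rule sum.swap)
  also have "\<dots> = Q S w"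
    unfolding Q_def by (intro sum.cong refl) (simp add: mult.commute mult.left_commute)
  finally have c: "cnj (Q S w) = Q S w" .
  have "Im (cnj (Q S w)) = - Im (Q S w)" by simp
  thus ?thesis unfolding c by simp
qed

lemma Q_nonneg:
  assumes "positive_semidef S" "S \<in> carrier_mat 4 4" "w \<in> carrier_vec 4"
  shows "0 \<le> Re (Q S w)"
proof -
  have d: "dim_row S = 4" using assms(2) by simp
  have "\<forall>v\<in>carrier_vec 4. 0 \<le> Re (\<Sum>i < 4. \<Sum>j < 4. cnj (v $ i) * S $$ (i,j) * v $ j)"
    using assms(1) unfolding positive_semidef_def d by blast
  thus ?thesis using assms(3) unfolding Q_def by blast
qed

lemma Q_eig:
  assumes "T \<in> carrier_mat 4 4" "u \<in> carrier_vec 4" "T *\<^sub>v u = l \<cdot>\<^sub>v u"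
  shows "Q T u = l * (\<Sum>i<4. cnj(u$i)*u$i)"
proof -
  have r: "(\<Sum>j<4. T $$ (i,j) * u $ j) = l * u $ i" if "i < 4" for i
  proof -
    have "(T *\<^sub>v u) $ i = l * u $ i" using assms that by simp
    moreover have "(T *\<^sub>v u) $ i = (\<Sum>j<4. T $$ (i,j) * u $ j)"
      using assms(1,2) that by (simp add: scalar_prod_def lessThan_atLeast0)
    ultimately show ?thesis by simp
  qed
  have "Q T u = (\<Sum>i<4. cnj (u$i) * (\<Sum>j<4. T $$ (i,j) * u $ j))"
    unfolding Q_def by (simp add: sum_distrib_left mult.assoc)
  also have "\<dots> = (\<Sum>i<4. cnj (u$i) * (l * u $ i))"
    using r by (intro sum.cong refl) auto
  finally show ?thesis by (simp add: sum_distrib_left mult.commute mult.left_commute)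
qed

lemma nu_props:
  assumes "u \<in> carrier_vec 4" "u \<noteq> 0\<^sub>v 4"
  shows "Im (\<Sum>i<4. cnj(u$i)*u$i) = 0" "Re (\<Sum>i<4. cnj(u$i)*u$i) > 0"
proof -
  have e: "cnj(u$i)*u$i = complex_of_real ((cmod (u$i))^2)" for i
    using complex_norm_square[of "u$i"] by (simp add: mult.commute)
  have s: "(\<Sum>i<4. cnj(u$i)*u$i) = complex_of_real (\<Sum>i<4. (cmod (u$i))^2)"
    unfolding e by simp
  show "Im (\<Sum>i<4. cnj(u$i)*u$i) = 0" unfolding s by simp
  have "\<exists>k<4. u $ k \<noteq> 0"
  proof (rule ccontr)
    assume "\<not> (\<exists>k<4. u $ k \<noteq> 0)"
    hence "u = 0\<^sub>v 4" using assms(1) by (intro eq_vecI) auto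
    thus False using assms(2) by contradiction
  qed
  then obtain k where k: "k < 4" "u $ k \<noteq> 0" by blast
  have "(cmod (u$k))^2 \<le> (\<Sum>i<4. (cmod (u$i))^2)"
    using k by (intro member_le_sum) auto
  moreover have "(cmod (u$k))^2 > 0" using k by simp
  ultimately have "(\<Sum>i<4. (cmod (u$i))^2) > 0" by linarith
  thus "Re (\<Sum>i<4. cnj(u$i)*u$i) > 0" unfolding s by simp
qed

lemma part1:
  assumes d: "density2 \<sigma>" and ev: "eigenvalue (id_tensor_P \<sigma>) l"
  shows "l \<in> \<real> \<and> - 1 / 4 \<le> Re l"
proof -
  from ev obtain u where u: "u \<in> carrier_vec 4" "u \<noteq> 0\<^sub>v 4" "id_tensor_P \<sigma> *\<^sub>v u = l \<cdot>\<^sub>v u"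
    unfolding eigenvalue_def eigenvector_def by (auto simp: id_tensor_P_def)
  have sc: "\<sigma> \<in> carrier_mat 4 4" and ps: "positive_semidef \<sigma>" and tr: "(\<Sum>i < 4. \<sigma> $$ (i,i)) = 1"
    using d unfolding density2_def by auto
  have herm: "\<forall>i<4. \<forall>j<4. \<sigma> $$ (j,i) = cnj (\<sigma> $$ (i,j))"
  proof -
    have d: "dim_row \<sigma> = 4" using sc by simp
    show ?thesis using ps unfolding positive_semidef_def d by blast
  qed
  define nu where "nu = (\<Sum>i<4. cnj(u$i)*u$i)"
  have nuI: "Im nu = 0" and nuR: "Re nu > 0" using nu_props[OF u(1,2)] nu_def by auto
  have TQ: "Q (id_tensor_P \<sigma>) u = l * nu"
    using Q_eig[OF _ u(1) u(3)] nu_def by (simp add: id_tensor_P_def)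
  define R where "R = 1/2 * Q \<sigma> u + 1/2 * Q \<sigma> (v4 (cnj(u$1)) (cnj(u$0)) 0 0) + 1/2 * Q \<sigma> (v4 0 0 (cnj (u$3)) (cnj (u$2)))
  + 1/4 * Q \<sigma> (v4 (cnj (u$3)) (cnj (u$2)) (cnj (u$1)) (cnj (u$0)))
  + 1/4 * (Q \<sigma> (v4 (u$2) (-u$3) 0 0) + Q \<sigma> (v4 (-u$1) 0 (-u$3) 0) + Q \<sigma> (v4 (-u$0) 0 0 (-u$3))
         + Q \<sigma> (v4 0 (-u$1) (-u$2) 0) + Q \<sigma> (v4 0 (-u$0) 0 (-u$2)) + Q \<sigma> (v4 0 0 (-u$0) (u$1)))"
  have eq: "l * nu + nu / 4 = R"
    using key[of \<sigma> u] TQ tr unfolding R_def nu_def by simp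
  have RI: "Im R = 0" unfolding R_def using Q_real[OF herm] by simp
  have RR: "Re R \<ge> 0" unfolding R_def using Q_nonneg[OF ps sc] u(1) by simp
  have "Im (l * nu + nu / 4) = Im l * Re nu" using nuI by simp
  hence "Im l * Re nu = 0" using eq RI by simp
  hence "Im l = 0" using nuR by simp
  moreover have "Re (l * nu + nu / 4) = Re l * Re nu + Re nu / 4" using nuI by simp
  hence "Re l * Re nu + Re nu / 4 \<ge> 0" using eq RR by simp
  hence "(Re l + 1/4) * Re nu \<ge> 0" by (simp add: algebra_simps)
  hence "Re l + 1/4 \<ge> 0" using nuR by (simp add: zero_le_mult_iff)
  ultimately show ?thesis by (simp add: complex_is_Real_iff)
qed

lemma h: "complex_of_real (1 / sqrt 2) * complex_of_real (1 / sqrt 2) = 1/2"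
  proof -
    have h0: "(1/sqrt 2) * (1/sqrt 2) = (1/2::real)" by simp
    have "complex_of_real (1 / sqrt 2) * complex_of_real (1 / sqrt 2) = complex_of_real ((1/sqrt 2) * (1/sqrt 2))"
      by (simp only: of_real_mult)
    also have "\<dots> = 1/2" unfolding h0 by simp
    finally show ?thesis .
  qed
lemma bs: "i < 4 \<Longrightarrow> j < 4 \<Longrightarrow> bell_state $$ (i,j) = bell_vec $ i * cnj (bell_vec $ j)"
  by (simp add: bell_state_def)
lemma bv: "i < 4 \<Longrightarrow> bell_vec $ i = (if i = 0 \<or> i = 3 then complex_of_real (1 / sqrt 2) else 0)"
  by (simp add: bell_vec_def)
lemma h2: "complex_of_real (sqrt 2) * complex_of_real (sqrt 2) = 2"
  by (simp flip: of_real_mult)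
lemma bell_idx: "i < 4 \<Longrightarrow> j < 4 \<Longrightarrow> bell_state $$ (i,j) =
   (if (i = 0 \<or> i = 3) \<and> (j = 0 \<or> j = 3) then 1/2 else 0)"
  by (simp add: bs bv h h2)

lemma Tb: "i < 4 \<Longrightarrow> j < 4 \<Longrightarrow> id_tensor_P bell_state $$ (i,j) =
   (if i = j then 1/4 else if (i = 0 \<and> j = 3) \<or> (i = 3 \<and> j = 0) then 1/2 else 0)"
proof -
  assume "i < 4" "j < 4"
  hence "i = 0 \<or> i = 1 \<or> i = 2 \<or> i = 3" "j = 0 \<or> j = 1 \<or> j = 2 \<or> j = 3" by auto
  thus ?thesis by (elim disjE) (simp_all add: T_idx bell_idx)
qed

lemma part2: "density2 bell_state"
proof -
  have c: "bell_state \<in> carrier_mat 4 4" by (simp add: bell_state_def)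
  have dr: "dim_row bell_state = 4" by (simp add: bell_state_def)
  have "0 \<le> Re (\<Sum>i < 4. \<Sum>j < 4. cnj (v $ i) * bell_state $$ (i,j) * v $ j)" for v :: "complex vec"
  proof -
    have "(\<Sum>i < 4. \<Sum>j < 4. cnj (v $ i) * bell_state $$ (i,j) * v $ j)
        = 1/2 * (cnj (v$0 + v$3) * (v$0 + v$3))"
      unfolding sum4 by (simp add: bell_idx algebra_simps)
    also have "\<dots> = complex_of_real (1/2 * (cmod (v$0 + v$3))^2)"
      using complex_norm_square[of "v$0+v$3"] by (simp add: mult.commute)
    finally have eq: "(\<Sum>i < 4. \<Sum>j < 4. cnj (v $ i) * bell_state $$ (i,j) * v $ j) = complex_of_real (1/2 * (cmod (v$0 + v$3))^2)" .
    have "Re (\<Sum>i < 4. \<Sum>j < 4. cnj (v $ i) * bell_state $$ (i,j) * v $ j) = 1/2 * (cmod (v$0 + v$3))^2"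
      by (simp only: eq Re_complex_of_real)
    moreover have "0 \<le> 1/2 * (cmod (v$0 + v$3))^2" by simp
    ultimately show ?thesis by (simp only:)
  qed
  moreover have "\<forall>i<4. \<forall>j<4. bell_state $$ (j,i) = cnj (bell_state $$ (i,j))"
    by (auto simp: bell_idx)
  moreover have "(\<Sum>i < 4. bell_state $$ (i,i)) = 1"
    unfolding sum4 by (simp add: bell_idx)
  ultimately have h: "\<forall>v \<in> carrier_vec 4. 0 \<le> Re (\<Sum>i < 4. \<Sum>j < 4. cnj (v $ i) * bell_state $$ (i,j) * v $ j)"
    "\<forall>i<4. \<forall>j<4. bell_state $$ (j,i) = cnj (bell_state $$ (i,j))"
    "(\<Sum>i < 4. bell_state $$ (i,i)) = 1" by blast+
  have "positive_semidef bell_state"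
    unfolding positive_semidef_def dr using c h(1,2) by blast
  thus ?thesis unfolding density2_def using c h(3) by blast
qed

lemma part3: "eigenvalue (id_tensor_P bell_state) (- 1 / 4)"
proof -
  have "eigenvector (id_tensor_P bell_state) (v4 1 0 0 (-1)) (- 1 / 4)"
    unfolding eigenvector_def
  proof (intro conjI)
    show "v4 1 0 0 (- 1) \<in> carrier_vec (dim_row (id_tensor_P bell_state))"
      by (simp add: id_tensor_P_def)
    show "v4 1 0 0 (- 1) \<noteq> 0\<^sub>v (dim_row (id_tensor_P bell_state))"
    proof
      assume "v4 1 0 0 (- 1) = 0\<^sub>v (dim_row (id_tensor_P bell_state))"
      hence "v4 1 0 0 (- 1) $ 0 = 0\<^sub>v 4 $ 0" by (simp add: id_tensor_P_def)
      thus False by simp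
    qed
    show "id_tensor_P bell_state *\<^sub>v v4 1 0 0 (- 1) = - 1 / 4 \<cdot>\<^sub>v v4 1 0 0 (- 1)"
    proof (rule eq_vecI)
      fix i assume "i < dim_vec (- 1 / 4 \<cdot>\<^sub>v v4 1 0 0 (- 1))"
      hence i: "i < 4" by (simp add: v4_def)
      have "(id_tensor_P bell_state *\<^sub>v v4 1 0 0 (- 1)) $ i
          = (\<Sum>j<4. id_tensor_P bell_state $$ (i,j) * v4 1 0 0 (- 1) $ j)"
        using i by (simp add: id_tensor_P_def scalar_prod_def lessThan_atLeast0 v4_def)
      also have "\<dots> = (- 1 / 4 \<cdot>\<^sub>v v4 1 0 0 (- 1)) $ i"
      proof -
        have "i = 0 \<or> i = 1 \<or> i = 2 \<or> i = 3" using i by auto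
        thus ?thesis unfolding sum4 by (elim disjE) (simp_all add: Tb)
      qed
      finally show "(id_tensor_P bell_state *\<^sub>v v4 1 0 0 (- 1)) $ i = (- 1 / 4 \<cdot>\<^sub>v v4 1 0 0 (- 1)) $ i" .
    qed (simp add: id_tensor_P_def v4_def)
  qed
  thus ?thesis unfolding eigenvalue_def by (rule exI)
qed

theorem proposition1:
  shows "(\<forall>\<sigma> (l::complex). density2 \<sigma> \<longrightarrow> eigenvalue (id_tensor_P \<sigma>) l \<longrightarrow> l \<in> \<real> \<and> - 1 / 4 \<le> Re l)
    \<and> density2 bell_state \<and> eigenvalue (id_tensor_P bell_state) (- 1 / 4)"
proof -
  have A: "\<forall>\<sigma> (l::complex). density2 \<sigma> \<longrightarrow> eigenvalue (id_tensor_P \<sigma>) l \<longrightarrow> l \<in> \<real> \<and> - 1 / 4 \<le> Re l"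
    by (intro allI impI) (erule (1) part1)
  show ?thesis by (rule conjI[OF A conjI[OF part2 part3]])
qed

end
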